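(* Let $X$ be a subordinator with Lévy measure $\Pi$ satisfying $\int(e^{\lambda_0x}-1)\,\Pi(dx)<\infty$ for some $\lambda_0>0$. For $x>0$ let $L_x=\inf\{t:X(t)>x\}$ and $D_x=X(L_x)$ (and $D_0 = X(L_0)$ similarly). Then there exists a finite constant $C>0$ depending on $\Pi$ and $\lambda_0$ such that $$\mathbb{P}[D_x-x\ge y]\le Ce^{-\lambda_0 y}\quad\text{for all }x\ge0,\ y\ge0.$$
   Context: A subordinator is a right-continuous increasing process $(X(t),t\ge0)$ with $X(0)=0$, values in $[0,\infty)$, and independent homogeneous increments; it can be written $X(t)=dt+\sum_{s\le t}\Delta_s$ with drift $d\ge0$ and $(\Delta_s)$ a Poisson point process with intensity $\Pi$, the Lévy measure, a measure on $(0,\infty)$ with $\int(1\wedge x)\Pi(dx)<\infty$. *)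

theory Defs
  imports "HOL-Probability.Probability"
begin

definition subordinator :: "'a measure \<Rightarrow> (real \<Rightarrow> 'a \<Rightarrow> real) \<Rightarrow> bool" where
  "subordinator M X \<longleftrightarrow>
     prob_space M \<and>
     (\<forall>t\<ge>0. X t \<in> borel_measurable M) \<and>
     (\<forall>\<omega>\<in>space M. X 0 \<omega> = 0 \<and> mono_on {0..} (\<lambda>t. X t \<omega>) \<and>
        (\<forall>t\<ge>0. continuous (at_right t) (\<lambda>s. X s \<omega>))) \<and>
     (\<forall>(n::nat) (ts::nat \<Rightarrow> real). 0 \<le> ts 0 \<and> (\<forall>i<n. ts i \<le> ts (Suc i)) \<longrightarrow>
        prob_space.indep_vars M (\<lambda>_. borel) (\<lambda>i \<omega>. X (ts (Suc i)) \<omega> - X (ts i) \<omega>) {..<n}) \<and>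
     (\<forall>s\<ge>0. \<forall>t\<ge>0. distr M borel (\<lambda>\<omega>. X (s + t) \<omega> - X s \<omega>) = distr M borel (X t))"

definition subordinator_dl ::
  "'a measure \<Rightarrow> (real \<Rightarrow> 'a \<Rightarrow> real) \<Rightarrow> real \<Rightarrow> real measure \<Rightarrow> bool" where
  "subordinator_dl M X d Lev \<longleftrightarrow>
     subordinator M X \<and> 0 \<le> d \<and>
     sets Lev = sets borel \<and> emeasure Lev {..0} = 0 \<and>
     (\<integral>\<^sup>+ x. ennreal (min 1 x) \<partial>Lev) < \<infinity> \<and>
     (\<forall>t\<ge>0. \<forall>q\<ge>0.
        prob_space.expectation M (\<lambda>\<omega>. exp (- q * X t \<omega>))
          = exp (- t * (d * q + (\<integral>x. 1 - exp (- q * x) \<partial>Lev))))"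

text \<open>First passage time L_x = inf {t. X t > x} (only meaningful when the set is nonempty).\<close>
definition first_passage :: "(real \<Rightarrow> 'a \<Rightarrow> real) \<Rightarrow> real \<Rightarrow> 'a \<Rightarrow> real" where
  "first_passage X x \<omega> = Inf {t. 0 \<le> t \<and> x < X t \<omega>}"

definition overshoot_event ::
  "'a measure \<Rightarrow> (real \<Rightarrow> 'a \<Rightarrow> real) \<Rightarrow> real \<Rightarrow> real \<Rightarrow> 'a set" where
  "overshoot_event M X x y =
     {\<omega> \<in> space M. {t. 0 \<le> t \<and> x < X t \<omega>} \<noteq> {} \<and>
        y \<le> X (first_passage X x \<omega>) \<omega> - x}"

end

theory Submission
  imports Defs "HOL-Complex_Analysis.Complex_Analysis"
begin

lemma pow_fact_le_exp:
  fixes x :: real assumes "0 \<le> x" shows "x ^ n / fact n \<le> exp x"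
proof -
  have "(\<Sum>i\<in>{n}. x ^ i / fact i) \<le> (\<Sum>i. x ^ i / fact i)"
    using assms summable_exp_generic[of x]
    by (intro sum_le_suminf) (auto simp: divide_inverse ac_simps)
  also have "\<dots> = exp x" by (simp add: exp_def divide_inverse ac_simps)
  finally show ?thesis by simp
qed

lemma pow_fact_le_exp1:
  fixes x :: real assumes "0 \<le> x" shows "x ^ Suc n / fact (Suc n) \<le> exp x - 1"
proof -
  have "(\<Sum>i\<in>{0, Suc n}. x ^ i / fact i) \<le> (\<Sum>i. x ^ i / fact i)"
    using assms summable_exp_generic[of x]
    by (intro sum_le_suminf) (auto simp: divide_inverse ac_simps)
  also have "\<dots> = exp x" by (simp add: exp_def divide_inverse ac_simps)
  finally show ?thesis by simp
qed

lemma sums_integral_nonneg: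
  fixes f :: "nat \<Rightarrow> 'a \<Rightarrow> real"
  assumes int: "\<And>i. integrable M (f i)" and nn: "\<And>i. AE x in M. 0 \<le> f i x"
    and s: "AE x in M. (\<lambda>i. f i x) sums F x" and intF: "integrable M F"
  shows "(\<lambda>i. \<integral>x. f i x \<partial>M) sums (\<integral>x. F x \<partial>M)"
proof -
  have nnall: "AE x in M. \<forall>i. 0 \<le> f i x" using nn by (simp add: AE_all_countable)
  have Fnn: "AE x in M. 0 \<le> F x" using s nnall
      by eventually_elim (auto intro: sums_le[of "\<lambda>_. 0"])
  have "ennreal (\<integral>x. F x \<partial>M) = (\<integral>\<^sup>+x. ennreal (F x) \<partial>M)"
    by (rule nn_integral_eq_integral[symmetric, OF intF Fnn])
  also have "\<dots> = (\<integral>\<^sup>+x. (\<Sum>i. ennreal (f i x)) \<partial>M)"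
    using s nnall by (intro nn_integral_cong_AE, eventually_elim) (rule suminf_ennreal_eq[symmetric], auto)
  also have "\<dots> = (\<Sum>i. \<integral>\<^sup>+x. ennreal (f i x) \<partial>M)"
    using int by (intro nn_integral_suminf) auto
  also have "\<dots> = (\<Sum>i. ennreal (\<integral>x. f i x \<partial>M))"
    using int nn by (intro suminf_cong nn_integral_eq_integral) auto
  finally have eq: "(\<Sum>i. ennreal (\<integral>x. f i x \<partial>M)) = ennreal (\<integral>x. F x \<partial>M)" ..
  have nn': "\<And>i. 0 \<le> (\<integral>x. f i x \<partial>M)" using nn by (intro integral_nonneg_AE) auto
  have sm: "summable (\<lambda>i. \<integral>x. f i x \<partial>M)"
    using eq nn' by (intro summable_suminf_not_top) auto
  have "ennreal (\<Sum>i. \<integral>x. f i x \<partial>M) = ennreal (\<integral>x. F x \<partial>M)"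
    using eq sm nn' by (simp add: suminf_ennreal2)
  moreover have "0 \<le> (\<Sum>i. \<integral>x. f i x \<partial>M)" using sm nn' by (simp add: suminf_nonneg)
  moreover have "0 \<le> (\<integral>x. F x \<partial>M)"
    using Fnn by (intro integral_nonneg_AE) auto
  ultimately have "(\<Sum>i. \<integral>x. f i x \<partial>M) = (\<integral>x. F x \<partial>M)" by simp
  then show ?thesis using sm by (metis summable_sums)
qed

locale levm =
  fixes Lev :: "real measure" and lambda0 :: real
  assumes lam: "0 < lambda0"
    and Kfin: "(\<integral>\<^sup>+x. ennreal (exp (lambda0 * x) - 1) \<partial>Lev) < \<infinity>"
    and sets_Lev: "sets Lev = sets borel"
    and Lneg: "emeasure Lev {..0} = 0"
    and m1: "(\<integral>\<^sup>+x. ennreal (min 1 x) \<partial>Lev) < \<infinity>"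
begin

lemma measL: "f \<in> borel_measurable borel \<Longrightarrow> f \<in> borel_measurable Lev"
  by (subst measurable_cong_sets[OF sets_Lev refl])

lemma AE_pos: "AE x in Lev. 0 < x"
proof (rule AE_I')
  show "{..0} \<in> null_sets Lev" using Lneg sets_Lev by (simp add: null_sets_def)
  show "{x \<in> space Lev. \<not> 0 < x} \<subseteq> {..0}" by auto
qed

definition gdom :: "real \<Rightarrow> real" where "gdom x = exp (lambda0 * x) - exp (- x)"

lemma int_g: "integrable Lev gdom"
proof (rule integrableI_nonneg)
  show "gdom \<in> borel_measurable Lev" unfolding gdom_def by (intro measL) measurable
  show "AE x in Lev. 0 \<le> gdom x" using AE_pos
  proof eventually_elim
    case (elim x) then show ?case using lam unfolding gdom_def
      by (smt (verit) exp_ge_zero exp_le_cancel_iff mult_pos_pos)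
  qed
  have "(\<integral>\<^sup>+x. ennreal (gdom x) \<partial>Lev) \<le>
      (\<integral>\<^sup>+x. ennreal (exp (lambda0 * x) - 1) + ennreal (min 1 x) \<partial>Lev)"
  proof (rule nn_integral_mono_AE)
    show "AE x in Lev. ennreal (gdom x) \<le> ennreal (exp (lambda0 * x) - 1) + ennreal (min 1 x)"
      using AE_pos
    proof eventually_elim
      case (elim x)
      have a: "1 \<le> exp (lambda0 * x)" using lam elim by simp
      have b0: "1 - exp (- x) \<le> x" using exp_ge_add_one_self[of "-x"] by simp
      have b1: "1 - exp (- x) \<le> 1" by simp
      have b: "1 - exp (- x) \<le> min 1 x" using b0 b1 by simp
      have "gdom x = (exp (lambda0 * x) - 1) + (1 - exp (-x))" unfolding gdom_def by simp
      also have "\<dots> \<le> (exp (lambda0 * x) - 1) + min 1 x" using b by linarith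
      finally have "ennreal (gdom x) \<le> ennreal ((exp (lambda0 * x) - 1) + min 1 x)"
        by (rule ennreal_leI)
      also have "\<dots> = ennreal (exp (lambda0 * x) - 1) + ennreal (min 1 x)"
        using a elim by (intro ennreal_plus) auto
      finally show ?case .
    qed
  qed
  also have "\<dots> = (\<integral>\<^sup>+x. ennreal (exp (lambda0 * x) - 1) \<partial>Lev) + (\<integral>\<^sup>+x. ennreal (min 1 x) \<partial>Lev)"
    by (intro nn_integral_add) (auto intro!: measL)
  also have "\<dots> < \<infinity>" using Kfin m1 by (simp add: ennreal_add_less_top)
  finally show "(\<integral>\<^sup>+x. ennreal (gdom x) \<partial>Lev) < \<infinity>" .
qed

lemma int_dom:
  assumes "f \<in> borel_measurable borel" "AE x in Lev. 0 < x \<longrightarrow> \<bar>f x\<bar> \<le> gdom x"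
  shows "integrable Lev f"
proof (rule Bochner_Integration.integrable_bound[OF int_g])
  show "f \<in> borel_measurable Lev" using assms(1) by (rule measL)
  show "AE x in Lev. norm (f x) \<le> norm (gdom x)" using assms(2) AE_pos
    by eventually_elim auto
qed

lemma dom_exp:
  assumes "0 < x" "-1 \<le> s" "s \<le> lambda0"
  shows "\<bar>1 - exp (s * x)\<bar> \<le> gdom x"
proof (cases "0 \<le> s")
  case True
  then have "1 \<le> exp (s * x)" using assms by simp
  moreover have "exp (s * x) \<le> exp (lambda0 * x)" using assms by (simp add: mult_right_mono)
  moreover have "exp (- x) \<le> 1" using assms by simp
  ultimately show ?thesis unfolding gdom_def by linarith
next
  case False
  then have "exp (s * x) \<le> 1" using assms by (simp add: mult_nonneg_nonneg mult_le_0_iff)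
  moreover have "exp (-x) \<le> exp (s * x)" using assms mult_right_mono[of "-1" s x] by simp
  moreover have "1 \<le> exp (lambda0 * x)" using assms lam by simp
  ultimately show ?thesis unfolding gdom_def by linarith
qed

lemma int_Psi: "-1 \<le> s \<Longrightarrow> s \<le> lambda0 \<Longrightarrow> integrable Lev (\<lambda>x. 1 - exp (s * x))"
  by (rule int_dom) (auto intro!: dom_exp)

definition Psi :: "real \<Rightarrow> real" where "Psi s = (\<integral>x. 1 - exp (s * x) \<partial>Lev)"

definition phi :: "nat \<Rightarrow> real" where
  "phi n = (if n = 0 then Psi (-1) else - (\<integral>x. x ^ n * exp (- x) \<partial>Lev) / fact n)"

lemma phi_sums:
  assumes l0: "0 \<le> l" and l1: "l \<le> 1 + lambda0"
  shows "(\<lambda>n. phi n * l ^ n) sums Psi (l - 1)"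
proof -
  define f where "f i x = ((l * x) ^ Suc i / fact (Suc i)) * exp (- x)" for i x
  define F where "F x = exp ((l - 1) * x) - exp (- x)" for x
  have ptw: "(\<lambda>i. f i x) sums F x" for x
  proof -
    have "(\<lambda>n. (l * x) ^ n / fact n) sums exp (l * x)"
      using exp_converges[of "l * x"] by (simp add: divide_inverse ac_simps)
    then have "(\<lambda>n. (l * x) ^ Suc n / fact (Suc n)) sums (exp (l * x) - 1)"
      by (subst sums_Suc_iff) simp
    then have "(\<lambda>n. (l * x) ^ Suc n / fact (Suc n) * exp (- x)) sums ((exp (l * x) - 1) * exp (- x))"
      by (rule sums_mult2)
    moreover have "(exp (l * x) - 1) * exp (- x) = F x"
      unfolding F_def by (simp add: left_diff_distrib exp_add[symmetric] algebra_simps)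
    ultimately show ?thesis unfolding f_def by simp
  qed
  have fnn: "0 \<le> f i x" if "0 < x" for i x using that l0 unfolding f_def by simp
  have fle: "f i x \<le> F x" if "0 < x" for i x
  proof -
    have "(\<Sum>j\<in>{i}. f j x) \<le> (\<Sum>j. f j x)"
      using ptw[of x] fnn[OF that] by (intro sum_le_suminf) (auto simp: sums_iff)
    then show ?thesis using ptw[of x] by (simp add: sums_iff)
  qed
  have Fdom: "\<bar>F x\<bar> \<le> gdom x" if "0 < x" for x
  proof -
    have "exp ((l - 1) * x) \<le> exp (lambda0 * x)" using that l1 by (simp add: mult_right_mono)
    moreover have "exp (- x) \<le> exp ((l - 1) * x)" using that l0 mult_right_mono[of "-1" "l - 1" x] by simp
    ultimately show ?thesis unfolding F_def gdom_def by simp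
  qed
  have intF: "integrable Lev F"
  proof (rule int_dom)
    show "F \<in> borel_measurable borel" unfolding F_def by measurable
    show "AE x in Lev. 0 < x \<longrightarrow> \<bar>F x\<bar> \<le> gdom x" using Fdom by (intro AE_I2) auto
  qed
  have intf: "integrable Lev (f i)" for i
  proof (rule int_dom)
    show "f i \<in> borel_measurable borel" unfolding f_def by measurable
    show "AE x in Lev. 0 < x \<longrightarrow> \<bar>f i x\<bar> \<le> gdom x"
      using fnn fle Fdom by (intro AE_I2) (smt (verit))
  qed
  have "(\<lambda>i. \<integral>x. f i x \<partial>Lev) sums (\<integral>x. F x \<partial>Lev)"
  proof (rule sums_integral_nonneg[OF intf _ _ intF])
    show "AE x in Lev. 0 \<le> f i x" for i using AE_pos by eventually_elim (rule fnn)
    show "AE x in Lev. (\<lambda>i. f i x) sums F x" using ptw by simp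
  qed
  moreover have "(\<integral>x. F x \<partial>Lev) = Psi (-1) - Psi (l - 1)"
  proof -
    have "(\<integral>x. F x \<partial>Lev) = (\<integral>x. (1 - exp ((-1) * x)) - (1 - exp ((l - 1) * x)) \<partial>Lev)"
      unfolding F_def by (intro Bochner_Integration.integral_cong) auto
    also have "\<dots> = Psi (-1) - Psi (l - 1)" unfolding Psi_def
      using l0 l1 by (intro Bochner_Integration.integral_diff int_Psi) auto
    finally show ?thesis .
  qed
  moreover have "(\<integral>x. f i x \<partial>Lev) = - (phi (Suc i) * l ^ Suc i)" for i
  proof -
    have "(\<integral>x. f i x \<partial>Lev) = (\<integral>x. (l ^ Suc i / fact (Suc i)) * (x ^ Suc i * exp (- x)) \<partial>Lev)"
      unfolding f_def by (intro Bochner_Integration.integral_cong) (auto simp: power_mult_distrib)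
    also have "\<dots> = (l ^ Suc i / fact (Suc i)) * (\<integral>x. x ^ Suc i * exp (- x) \<partial>Lev)"
      by (rule integral_mult_right_zero)
    finally show ?thesis unfolding phi_def by simp
  qed
  ultimately have "(\<lambda>i. - (phi (Suc i) * l ^ Suc i)) sums (Psi (-1) - Psi (l - 1))" by simp
  then have "(\<lambda>i. phi (Suc i) * l ^ Suc i) sums (Psi (l - 1) - Psi (-1))"
    using sums_minus by fastforce
  then have "(\<lambda>n. phi n * l ^ n) sums (Psi (l - 1) - Psi (-1) + phi 0 * l ^ 0)"
    by (subst sums_Suc_iff[symmetric]) simp
  then show ?thesis by (simp add: phi_def)
qed

lemma Psi_mono: "0 \<le> s \<Longrightarrow> s \<le> lambda0 \<Longrightarrow> Psi lambda0 \<le> Psi s"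
  unfolding Psi_def
proof (rule integral_mono_AE)
  assume "0 \<le> s" "s \<le> lambda0"
  then show "integrable Lev (\<lambda>x. 1 - exp (lambda0 * x))" "integrable Lev (\<lambda>x. 1 - exp (s * x))"
    using lam by (auto intro!: int_Psi)
  show "AE x in Lev. 1 - exp (lambda0 * x) \<le> 1 - exp (s * x)" using AE_pos
    by eventually_elim (use \<open>s \<le> lambda0\<close> in \<open>simp add: mult_right_mono\<close>)
qed

end


lemma ennreal_sums:
  fixes f :: "nat \<Rightarrow> real"
  assumes "\<And>n. 0 \<le> f n" "(\<Sum>n. ennreal (f n)) = ennreal x" "0 \<le> x"
  shows "f sums x"
proof -
  have sm: "summable f" using assms by (intro summable_suminf_not_top) auto
  then have "ennreal (\<Sum>n. f n) = ennreal x" using assms by (simp add: suminf_ennreal2)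
  then have "(\<Sum>n. f n) = x" using assms sm by (simp add: suminf_nonneg)
  then show ?thesis using sm by (metis summable_sums)
qed

context levm
begin

lemma moment:
  fixes M :: "'a measure" and Z :: "'a \<Rightarrow> real"
  assumes ps: "prob_space M" and Zm: "Z \<in> borel_measurable M"
    and Zn: "\<And>\<omega>. \<omega> \<in> space M \<Longrightarrow> 0 \<le> Z \<omega>"
    and t: "0 \<le> t" and d: "0 \<le> d"
    and lap: "\<And>q. 0 \<le> q \<Longrightarrow> prob_space.expectation M (\<lambda>\<omega>. exp (- q * Z \<omega>))
                  = exp (- t * (d * q + Psi (- q)))"
  shows "(\<integral>\<^sup>+\<omega>. ennreal (exp (lambda0 * Z \<omega>)) \<partial>M) \<le> ennreal (exp (t * (d * lambda0 - Psi lambda0)))"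
proof -
  interpret prob_space M by (rule ps)
  note Zm[measurable]
  define c where "c n = enn2real (\<integral>\<^sup>+\<omega>. ennreal (Z \<omega> ^ n * exp (- Z \<omega>) / fact n) \<partial>M)" for n
  have mu: "(\<integral>\<^sup>+\<omega>. ennreal (Z \<omega> ^ n * exp (- Z \<omega>) / fact n) \<partial>M) = ennreal (c n)" for n
  proof -
    have "(\<integral>\<^sup>+\<omega>. ennreal (Z \<omega> ^ n * exp (- Z \<omega>) / fact n) \<partial>M) \<le> (\<integral>\<^sup>+\<omega>. 1 \<partial>M)"
    proof (rule nn_integral_mono)
      fix \<omega> assume "\<omega> \<in> space M"
      then have z: "0 \<le> Z \<omega>" by (rule Zn)
      have "Z \<omega> ^ n / fact n \<le> exp (Z \<omega>)" using z by (rule pow_fact_le_exp)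
      then have "Z \<omega> ^ n * exp (- Z \<omega>) / fact n \<le> 1"
        by (simp add: exp_minus field_simps)
      then show "ennreal (Z \<omega> ^ n * exp (- Z \<omega>) / fact n) \<le> 1" by (simp add: ennreal_le_1)
    qed
    also have "\<dots> = 1" by (simp add: emeasure_space_1)
    finally have "(\<integral>\<^sup>+\<omega>. ennreal (Z \<omega> ^ n * exp (- Z \<omega>) / fact n) \<partial>M) \<noteq> \<top>"
      using neq_top_trans[OF ennreal_one_neq_top] by blast
    then show ?thesis unfolding c_def by (simp add: ennreal_enn2real_if)
  qed
  have cnn: "0 \<le> c n" for n unfolding c_def by simp
  have series: "(\<integral>\<^sup>+\<omega>. ennreal (exp ((l - 1) * Z \<omega>)) \<partial>M) = (\<Sum>n. ennreal (c n * l ^ n))"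
    if l: "0 \<le> l" for l
  proof -
    have pt: "ennreal (exp ((l - 1) * z)) = (\<Sum>n. ennreal (z ^ n * exp (- z) / fact n) * ennreal (l ^ n))"
      if z: "0 \<le> z" for z
    proof -
      have "(\<lambda>n. (l * z) ^ n / fact n) sums exp (l * z)"
        using exp_converges[of "l * z"] by (simp add: divide_inverse ac_simps)
      then have "(\<lambda>n. (l * z) ^ n / fact n * exp (- z)) sums (exp (l * z) * exp (- z))"
        by (rule sums_mult2)
      moreover have "exp (l * z) * exp (- z) = exp ((l - 1) * z)"
        by (simp add: exp_add[symmetric] algebra_simps)
      moreover have "(\<lambda>n. (l * z) ^ n / fact n * exp (- z)) = (\<lambda>n. z ^ n * exp (- z) / fact n * l ^ n)"
        by (simp add: fun_eq_iff power_mult_distrib)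
      ultimately have "(\<lambda>n. z ^ n * exp (- z) / fact n * l ^ n) sums exp ((l - 1) * z)" by metis
      then have "(\<Sum>n. ennreal (z ^ n * exp (- z) / fact n * l ^ n)) = ennreal (exp ((l - 1) * z))"
        using z l by (intro suminf_ennreal_eq) auto
      moreover have "(\<lambda>n. ennreal (z ^ n * exp (- z) / fact n) * ennreal (l ^ n))
          = (\<lambda>n. ennreal (z ^ n * exp (- z) / fact n * l ^ n))"
        by (intro ext, subst ennreal_mult) (auto simp: z l)
      ultimately show ?thesis by simp
    qed
    have "(\<integral>\<^sup>+\<omega>. ennreal (exp ((l - 1) * Z \<omega>)) \<partial>M)
        = (\<integral>\<^sup>+\<omega>. (\<Sum>n. ennreal (Z \<omega> ^ n * exp (- Z \<omega>) / fact n) * ennreal (l ^ n)) \<partial>M)"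
      by (intro nn_integral_cong) (simp add: pt Zn)
    also have "\<dots> = (\<Sum>n. \<integral>\<^sup>+\<omega>. ennreal (Z \<omega> ^ n * exp (- Z \<omega>) / fact n) * ennreal (l ^ n) \<partial>M)"
      by (intro nn_integral_suminf) measurable
    also have "\<dots> = (\<Sum>n. ennreal (c n) * ennreal (l ^ n))"
      using Zm by (subst nn_integral_multc) (auto simp: mu)
    also have "\<dots> = (\<Sum>n. ennreal (c n * l ^ n))"
      using cnn l by (simp add: ennreal_mult)
    finally show ?thesis .
  qed
  have lap': "(\<integral>\<^sup>+\<omega>. ennreal (exp ((l - 1) * Z \<omega>)) \<partial>M) = ennreal (exp (- t * (d * (1 - l) + Psi (l - 1))))"
    if "0 \<le> l" "l \<le> 1" for l
  proof -
    have int: "integrable M (\<lambda>\<omega>. exp (- (1 - l) * Z \<omega>))"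
    proof (rule integrable_const_bound[where B=1])
      show "AE x in M. norm (exp (- (1 - l) * Z x)) \<le> 1"
        using that Zn by (intro AE_I2) (auto simp: mult_nonpos_nonneg)
    qed (use Zm in measurable)
    have "(\<integral>\<^sup>+\<omega>. ennreal (exp ((l - 1) * Z \<omega>)) \<partial>M) = (\<integral>\<^sup>+\<omega>. ennreal (exp (- (1 - l) * Z \<omega>)) \<partial>M)"
      by simp
    also have "\<dots> = ennreal (expectation (\<lambda>\<omega>. exp (- (1 - l) * Z \<omega>)))"
      using int by (intro nn_integral_eq_integral) auto
    also have "\<dots> = ennreal (exp (- t * (d * (1 - l) + Psi (- (1 - l)))))"
      using that by (subst lap) auto
    finally show ?thesis by simp
  qed
  define E where "E l = exp (- t * (d * (1 - l) + Psi (l - 1)))" for l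
  have csums: "(\<lambda>n. c n * l ^ n) sums E l" if "0 \<le> l" "l \<le> 1" for l
  proof (rule ennreal_sums)
    show "0 \<le> c n * l ^ n" for n using cnn that by simp
    show "(\<Sum>n. ennreal (c n * l ^ n)) = ennreal (E l)"
      using series[of l] lap'[of l] that unfolding E_def by simp
    show "0 \<le> E l" by (simp add: E_def)
  qed
  define H :: "complex fps" where "H = Abs_fps (\<lambda>n. complex_of_real (c n))"
  define P :: "complex fps" where "P = Abs_fps (\<lambda>n. complex_of_real (phi n))"
  define Kf where "Kf w = exp (- complex_of_real t * (complex_of_real d * (1 - w) + eval_fps P w))" for w
  have radP: "ereal (1 + lambda0) \<le> fps_conv_radius P"
  proof -
    have "summable (\<lambda>n. phi n * (1 + lambda0) ^ n)"
      using phi_sums[of "1 + lambda0"] lam by (auto simp: sums_iff)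
    then have "summable (\<lambda>n. complex_of_real (phi n * (1 + lambda0) ^ n))"
      by (simp only: summable_complex_of_real)
    then have "summable (\<lambda>n. fps_nth P n * (complex_of_real (1 + lambda0)) ^ n)"
      by (simp add: P_def)
    then have "norm (complex_of_real (1 + lambda0)) \<le> fps_conv_radius P"
      unfolding fps_conv_radius_def by (rule conv_radius_geI)
    moreover have nrm: "norm (complex_of_real (1 + lambda0)) = 1 + lambda0"
      using lam by (subst norm_of_real) simp
    ultimately show ?thesis by (simp only: nrm)
  qed
  have radH: "1 \<le> fps_conv_radius H"
    unfolding fps_conv_radius_def
  proof (rule conv_radius_geI_ex')
    fix r :: real assume r: "0 < r" "ereal r < 1"
    have "summable (\<lambda>n. c n * r ^ n)" using csums[of r] r by (auto simp: sums_iff)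
    then have "summable (\<lambda>n. complex_of_real (c n * r ^ n))"
      by (simp only: summable_complex_of_real)
    then show "summable (\<lambda>n. fps_nth H n * complex_of_real r ^ n)" by (simp add: H_def)
  qed
  have evalP: "eval_fps P (complex_of_real l) = complex_of_real (Psi (l - 1))"
    if "0 \<le> l" "l < 1 + lambda0" for l
  proof -
    have "norm (complex_of_real l) < fps_conv_radius P"
    proof -
      have "ereal (norm (complex_of_real l)) = ereal l" using that by simp
      also have "\<dots> < ereal (1 + lambda0)" using that by simp
      also note radP
      finally show ?thesis .
    qed
    then have "(\<lambda>n. fps_nth P n * complex_of_real l ^ n) sums eval_fps P (complex_of_real l)"
      by (rule sums_eval_fps)
    moreover have "(\<lambda>n. complex_of_real (phi n * l ^ n)) sums complex_of_real (Psi (l - 1))"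
      using phi_sums[of l] that by (intro sums_of_real) auto
    ultimately show ?thesis by (simp add: P_def sums_unique2)
  qed
  have evalH: "eval_fps H (complex_of_real l) = complex_of_real (E l)"
    if "0 \<le> l" "l < 1" for l
  proof -
    have "norm (complex_of_real l) < fps_conv_radius H"
    proof -
      have "ereal (norm (complex_of_real l)) = ereal l" using that by simp
      also have "\<dots> < 1" using that by simp
      also note radH
      finally show ?thesis .
    qed
    then have "(\<lambda>n. fps_nth H n * complex_of_real l ^ n) sums eval_fps H (complex_of_real l)"
      by (rule sums_eval_fps)
    moreover have "(\<lambda>n. complex_of_real (c n * l ^ n)) sums complex_of_real (E l)"
      using csums[of l] that by (intro sums_of_real) auto
    ultimately show ?thesis by (simp add: H_def sums_unique2)
  qed
  have Kreal: "Kf (complex_of_real l) = complex_of_real (E l)"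
    if "0 \<le> l" "l < 1 + lambda0" for l
    using that unfolding Kf_def E_def by (simp add: evalP exp_of_real[symmetric])
  have holK: "Kf holomorphic_on eball 0 (ereal (1 + lambda0))"
  proof -
    have "eball 0 (ereal (1 + lambda0)) \<subseteq> eball 0 (fps_conv_radius P)"
      using radP by (rule eball_mono)
    then show ?thesis unfolding Kf_def by (intro holomorphic_intros)
  qed
  have eqball: "Kf w - eval_fps H w = 0" if w: "w \<in> ball 0 1" for w
  proof (rule analytic_continuation[where f = "\<lambda>w. Kf w - eval_fps H w" and S = "ball 0 1" and U = "complex_of_real ` {0<..<1}"
                                      and \<xi> = "complex_of_real (1/2)"])
    have "ball (0::complex) 1 \<subseteq> eball 0 (ereal (1 + lambda0))"
      using lam by (intro ball_eball_mono) auto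
    moreover have "ball (0::complex) 1 \<subseteq> eball 0 (fps_conv_radius H)"
      using radH by (intro ball_eball_mono) (simp add: one_ereal_def)
    ultimately show "(\<lambda>w. Kf w - eval_fps H w) holomorphic_on ball 0 1"
      using holK by (intro holomorphic_intros) (auto intro: holomorphic_on_subset)
    show "open (ball (0::complex) 1)" by simp
    show "connected (ball (0::complex) 1)" by simp
    show "complex_of_real ` {0<..<1} \<subseteq> ball 0 1" by auto
    show "complex_of_real (1/2) \<in> ball 0 1" by simp
    show "complex_of_real (1/2) islimpt complex_of_real ` {0<..<1}"
      unfolding islimpt_approachable
    proof (intro allI impI)
      fix e :: real assume e: "0 < e"
      define x' where "x' = 1/2 + min (e/2) (1/4)"
      have "x' \<in> {0<..<1}" using e unfolding x'_def by auto
      moreover have "complex_of_real x' \<noteq> complex_of_real (1/2)" using e unfolding x'_def by auto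
      moreover have "dist (complex_of_real x') (complex_of_real (1/2)) < e"
      proof -
        have "dist (complex_of_real x') (complex_of_real (1/2)) = dist x' (1/2)"
          by (simp only: dist_of_real)
        also have "\<dots> < e" using e unfolding x'_def dist_real_def by simp
        finally show ?thesis .
      qed
      ultimately show "\<exists>x'\<in>complex_of_real ` {0<..<1}. x' \<noteq> complex_of_real (1/2) \<and>
                         dist x' (complex_of_real (1/2)) < e" by blast
    qed
    show "Kf z - eval_fps H z = 0" if "z \<in> complex_of_real ` {0<..<1}" for z
    proof -
      from that obtain x where x: "z = complex_of_real x" "0 < x" "x < 1" by auto
      then show ?thesis using Kreal[of x] evalH[of x] lam by simp
    qed
  qed (rule w)
  have expK: "Kf has_fps_expansion H"
    unfolding has_fps_expansion_def
  proof
    show "0 < fps_conv_radius H" using less_le_trans[OF _ radH, of 0] by simp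
    have "eventually (\<lambda>z. z \<in> ball (0::complex) 1) (nhds 0)"
      by (intro eventually_nhds_in_open) auto
    then show "eventually (\<lambda>z. eval_fps H z = Kf z) (nhds 0)"
      by eventually_elim (use eqball in auto)
  qed
  have Esums: "(\<lambda>n. c n * l ^ n) sums E l" if "0 \<le> l" "l < 1 + lambda0" for l
  proof -
    have "(\<lambda>n. fps_nth H n * complex_of_real l ^ n) sums Kf (complex_of_real l)"
      using that by (intro has_fps_expansion_imp_sums_complex[OF expK holK]) auto
    then have "(\<lambda>n. Re (fps_nth H n * complex_of_real l ^ n)) sums Re (Kf (complex_of_real l))"
      by (rule sums_Re)
    then show ?thesis using that by (simp add: H_def Kreal flip: of_real_power)
  qed
  have bnd: "(\<integral>\<^sup>+\<omega>. ennreal (exp (s * Z \<omega>)) \<partial>M) \<le> ennreal (exp (t * (d * lambda0 - Psi lambda0)))"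
    if s: "0 \<le> s" "s < lambda0" for s
  proof -
    have "(\<integral>\<^sup>+\<omega>. ennreal (exp (s * Z \<omega>)) \<partial>M) = (\<Sum>n. ennreal (c n * (1 + s) ^ n))"
      using series[of "1 + s"] s by simp
    also have "\<dots> = ennreal (E (1 + s))"
      using Esums[of "1 + s"] s cnn by (intro suminf_ennreal_eq) auto
    also have "E (1 + s) = exp (t * (d * s - Psi s))" unfolding E_def by (simp add: algebra_simps)
    also have "\<dots> \<le> exp (t * (d * lambda0 - Psi lambda0))"
    proof -
      have "d * s \<le> d * lambda0" using s d by (intro mult_left_mono) auto
      then have "d * s - Psi s \<le> d * lambda0 - Psi lambda0" using Psi_mono[of s] s by linarith
      then show ?thesis using t by (simp add: mult_left_mono)
    qed
    finally show ?thesis by (simp add: ennreal_leI)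
  qed
  define sq where "sq n = lambda0 * (1 + - inverse (real (Suc n)))" for n
  have sq: "0 \<le> sq n" "sq n < lambda0" for n
    using lam unfolding sq_def by (auto simp: field_simps)
  have sqinc: "incseq sq" unfolding sq_def incseq_def using lam
    by (auto intro!: mult_left_mono simp: field_simps)
  have sqlim: "sq \<longlonglongrightarrow> lambda0"
    unfolding sq_def using tendsto_mult[OF tendsto_const LIMSEQ_inverse_real_of_nat_add_minus[of 1], of lambda0]
    by simp
  have ptw: "ennreal (exp (lambda0 * Z \<omega>)) = (SUP n. ennreal (exp (sq n * Z \<omega>)))" if "\<omega> \<in> space M" for \<omega>
  proof -
    have z: "0 \<le> Z \<omega>" using that by (rule Zn)
    have inc: "incseq (\<lambda>n. ennreal (exp (sq n * Z \<omega>)))"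
      using sqinc z unfolding incseq_def by (auto intro!: ennreal_leI mult_right_mono)
    have "(\<lambda>n. ennreal (exp (sq n * Z \<omega>))) \<longlonglongrightarrow> ennreal (exp (lambda0 * Z \<omega>))"
      by (intro tendsto_ennrealI tendsto_intros sqlim)
    then show ?thesis using LIMSEQ_SUP[OF inc] by (rule LIMSEQ_unique)
  qed
  have "(\<integral>\<^sup>+\<omega>. ennreal (exp (lambda0 * Z \<omega>)) \<partial>M) = (\<integral>\<^sup>+\<omega>. (SUP n. ennreal (exp (sq n * Z \<omega>))) \<partial>M)"
    by (intro nn_integral_cong) (simp add: ptw)
  also have "\<dots> = (SUP n. \<integral>\<^sup>+\<omega>. ennreal (exp (sq n * Z \<omega>)) \<partial>M)"
  proof (rule nn_integral_monotone_convergence_SUP_AE)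
    show "AE \<omega> in M. ennreal (exp (sq i * Z \<omega>)) \<le> ennreal (exp (sq (Suc i) * Z \<omega>))" for i
      using sqinc Zn unfolding incseq_def by (intro AE_I2) (auto intro!: ennreal_leI mult_right_mono)
  qed (use Zm in measurable)
  also have "\<dots> \<le> ennreal (exp (t * (d * lambda0 - Psi lambda0)))"
    using bnd sq by (intro SUP_least) auto
  finally show ?thesis .
qed

end

locale subo = levm Lev lambda0 for Lev :: "real measure" and lambda0 :: real +
  fixes M :: "'a measure" and X :: "real \<Rightarrow> 'a \<Rightarrow> real" and d :: real
  assumes sdl: "subordinator_dl M X d Lev"
begin

lemma sub: "subordinator M X" using sdl unfolding subordinator_dl_def by blast

lemma ps: "prob_space M" using sub unfolding subordinator_def by blast

sublocale prob_space M by (rule ps)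

lemma d_nn: "0 \<le> d" using sdl unfolding subordinator_dl_def by blast

lemma X_meas[measurable]: "0 \<le> t \<Longrightarrow> X t \<in> borel_measurable M"
  using sub unfolding subordinator_def by blast

lemma X0: "\<omega> \<in> space M \<Longrightarrow> X 0 \<omega> = 0"
  using sub unfolding subordinator_def by blast

lemma Xmono: "\<omega> \<in> space M \<Longrightarrow> 0 \<le> s \<Longrightarrow> s \<le> t \<Longrightarrow> X s \<omega> \<le> X t \<omega>"
  using sub unfolding subordinator_def mono_on_def by auto

lemma Xnn: "\<omega> \<in> space M \<Longrightarrow> 0 \<le> t \<Longrightarrow> 0 \<le> X t \<omega>"
  using Xmono[of \<omega> 0 t] X0[of \<omega>] by simp

lemma lap: "0 \<le> t \<Longrightarrow> 0 \<le> q \<Longrightarrow> expectation (\<lambda>\<omega>. exp (- q * X t \<omega>)) = exp (- t * (d * q + Psi (- q)))"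
  using sdl unfolding subordinator_dl_def Psi_def by blast

lemma ind_int: "S \<in> sets M \<Longrightarrow> integrable M (indicator S :: 'a \<Rightarrow> real)"
  by (simp add: integrable_indicator_iff Int_absorb2 sets.sets_into_space less_top[symmetric])

definition psi where "psi = d * lambda0 - Psi lambda0"

lemma mom: "0 \<le> t \<Longrightarrow> (\<integral>\<^sup>+\<omega>. ennreal (exp (lambda0 * X t \<omega>)) \<partial>M) \<le> ennreal (exp (t * psi))"
  unfolding psi_def
  by (rule moment[OF ps X_meas Xnn _ d_nn lap]) auto

lemma tail:
  assumes t: "0 \<le> t" and a: "0 < a"
  shows "prob {\<omega> \<in> space M. a \<le> X t \<omega>} \<le> (exp (t * psi) - 1) / (exp (lambda0 * a) - 1)"
proof -
  have ca: "0 < exp (lambda0 * a) - 1" using a lam by simp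
  have fin: "(\<integral>\<^sup>+\<omega>. ennreal (exp (lambda0 * X t \<omega>)) \<partial>M) < \<infinity>"
    using mom[OF t] by (simp add: le_less_trans)
  have int: "integrable M (\<lambda>\<omega>. exp (lambda0 * X t \<omega>))"
    using fin t by (intro integrableI_nonneg) auto
  have E: "expectation (\<lambda>\<omega>. exp (lambda0 * X t \<omega>)) \<le> exp (t * psi)"
  proof -
    have "expectation (\<lambda>\<omega>. exp (lambda0 * X t \<omega>)) = enn2real (\<integral>\<^sup>+\<omega>. ennreal (exp (lambda0 * X t \<omega>)) \<partial>M)"
      using t by (intro integral_eq_nn_integral) auto
    also have "\<dots> \<le> enn2real (ennreal (exp (t * psi)))"
      using mom[OF t] by (intro enn2real_mono) auto
    finally show ?thesis by simp
  qed
  have "prob {\<omega> \<in> space M. a \<le> X t \<omega>} * (exp (lambda0 * a) - 1)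
      = expectation (\<lambda>\<omega>. indicator {\<omega> \<in> space M. a \<le> X t \<omega>} \<omega> * (exp (lambda0 * a) - 1))"
    using t by simp
  also have "\<dots> \<le> expectation (\<lambda>\<omega>. exp (lambda0 * X t \<omega>) - 1)"
  proof (rule integral_mono)
    show "integrable M (\<lambda>\<omega>. indicator {\<omega> \<in> space M. a \<le> X t \<omega>} \<omega> * (exp (lambda0 * a) - 1))"
      using t by (intro integrable_mult_left ind_int) measurable
    show "integrable M (\<lambda>\<omega>. exp (lambda0 * X t \<omega>) - 1)" using int by auto
    fix \<omega> assume w: "\<omega> \<in> space M"
    show "indicator {\<omega> \<in> space M. a \<le> X t \<omega>} \<omega> * (exp (lambda0 * a) - 1) \<le> exp (lambda0 * X t \<omega>) - 1"
    proof (cases "a \<le> X t \<omega>")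
      case True then show ?thesis using w lam by (simp add: mult_left_mono)
    next
      case False then show ?thesis using w lam Xnn[OF w t] by (simp add: mult_nonneg_nonneg)
    qed
  qed
  also have "\<dots> = expectation (\<lambda>\<omega>. exp (lambda0 * X t \<omega>)) - 1"
    using int by (simp add: prob_space)
  also have "\<dots> \<le> exp (t * psi) - 1" using E by simp
  finally show ?thesis using ca by (simp add: pos_le_divide_eq)
qed

lemma small:
  assumes t: "0 \<le> t"
  shows "prob {\<omega> \<in> space M. X t \<omega> \<le> 1} \<le> exp 1 * exp (- t * (d + Psi (- 1)))"
proof -
  have "prob {\<omega> \<in> space M. X t \<omega> \<le> 1} = expectation (indicator {\<omega> \<in> space M. X t \<omega> \<le> 1})"
    using t by simp
  also have "\<dots> \<le> expectation (\<lambda>\<omega>. exp 1 * exp (- 1 * X t \<omega>))"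
  proof (rule integral_mono)
    show "integrable M (indicator {\<omega> \<in> space M. X t \<omega> \<le> 1} :: 'a \<Rightarrow> real)"
      using t by (intro ind_int) measurable
    show "integrable M (\<lambda>\<omega>. exp 1 * exp (- 1 * X t \<omega>))"
    proof (intro integrable_mult_right integrable_const_bound[where B=1])
      show "AE x in M. norm (exp (- 1 * X t x)) \<le> 1" using Xnn t by (intro AE_I2) auto
    qed (use t in measurable)
    fix \<omega> assume w: "\<omega> \<in> space M"
    show "indicator {\<omega> \<in> space M. X t \<omega> \<le> 1} \<omega> \<le> exp 1 * exp (- 1 * X t \<omega>)"
    proof (cases "X t \<omega> \<le> 1")
      case True
      then have "1 \<le> exp 1 * exp (- 1 * X t \<omega>)"
        by (simp add: exp_add[symmetric])
      then show ?thesis using True w by simp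
    qed (use w in simp)
  qed
  also have "\<dots> = exp 1 * expectation (\<lambda>\<omega>. exp (- 1 * X t \<omega>))" by simp
  also have "\<dots> = exp 1 * exp (- t * (d * 1 + Psi (- 1)))" using t by (subst lap) auto
  finally show ?thesis by simp
qed

lemma stat:
  assumes "0 \<le> s" "0 \<le> t" "B \<in> sets borel"
  shows "prob {\<omega> \<in> space M. X (s + t) \<omega> - X s \<omega> \<in> B} = prob {\<omega> \<in> space M. X t \<omega> \<in> B}"
proof -
  have eq: "distr M borel (\<lambda>\<omega>. X (s + t) \<omega> - X s \<omega>) = distr M borel (X t)"
    using sub assms unfolding subordinator_def by blast
  have "prob {\<omega> \<in> space M. X (s + t) \<omega> - X s \<omega> \<in> B} = measure (distr M borel (\<lambda>\<omega>. X (s + t) \<omega> - X s \<omega>)) B"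
    using assms by (subst measure_distr) (auto simp: vimage_def Int_def conj_commute)
  also have "\<dots> = measure (distr M borel (X t)) B" by (simp add: eq)
  also have "\<dots> = prob {\<omega> \<in> space M. X t \<omega> \<in> B}"
    using assms by (subst measure_distr) (auto simp: vimage_def Int_def conj_commute)
  finally show ?thesis .
qed

lemma indep3:
  assumes abc: "0 \<le> a" "a \<le> b" "b \<le> c"
    and A: "A \<in> sets (borel :: (real \<times> real) measure)" and B: "B \<in> sets (borel :: real measure)"
  shows "prob {\<omega> \<in> space M. (X a \<omega>, X b \<omega>) \<in> A \<and> X c \<omega> - X b \<omega> \<in> B}
       = prob {\<omega> \<in> space M. (X a \<omega>, X b \<omega>) \<in> A} * prob {\<omega> \<in> space M. X c \<omega> - X b \<omega> \<in> B}"
proof -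
  define ts :: "nat \<Rightarrow> real" where "ts i = (if i = 0 then 0 else if i = 1 then a else if i = 2 then b else c)" for i
  define Y where "Y i \<omega> = X (ts (Suc i)) \<omega> - X (ts i) \<omega>" for i \<omega>
  have ind: "indep_vars (\<lambda>_. borel) Y {..<3}"
  proof -
    have "0 \<le> ts 0 \<and> (\<forall>i<3. ts i \<le> ts (Suc i))"
      using abc unfolding ts_def by (auto simp: less_Suc_eq numeral_3_eq_3)
    then show ?thesis using sub unfolding subordinator_def Y_def by blast
  qed
  have ind2: "indep_var (PiM {0,1} (\<lambda>_. borel)) (\<lambda>\<omega>. restrict (\<lambda>i. Y i \<omega>) {0,1})
                       (PiM {2} (\<lambda>_. borel)) (\<lambda>\<omega>. restrict (\<lambda>i. Y i \<omega>) {2})"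
    by (rule indep_var_restrict[OF ind]) auto
  have g1: "(\<lambda>f. (f 0, f 0 + f 1)) \<in> measurable (PiM {0::nat,1} (\<lambda>_. borel)) (borel :: (real \<times> real) measure)"
    unfolding borel_prod[symmetric] by measurable
  have g2: "(\<lambda>f. (f 2, 0::real)) \<in> measurable (PiM {2::nat} (\<lambda>_. borel)) (borel :: (real \<times> real) measure)"
    unfolding borel_prod[symmetric] by measurable
  have ind3: "indep_var borel ((\<lambda>f. (f 0, f 0 + f 1)) \<circ> (\<lambda>\<omega>. restrict (\<lambda>i. Y i \<omega>) {0,1}))
                        borel ((\<lambda>f. (f 2, 0::real)) \<circ> (\<lambda>\<omega>. restrict (\<lambda>i. Y i \<omega>) {2}))"
    by (rule indep_var_compose[OF ind2 g1 g2])
  have e1: "((\<lambda>f. (f 0, f 0 + f 1)) \<circ> (\<lambda>\<omega>. restrict (\<lambda>i. Y i \<omega>) {0,1})) = (\<lambda>\<omega>. (Y 0 \<omega>, Y 0 \<omega> + Y 1 \<omega>))"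
    by (auto simp: fun_eq_iff)
  have e2: "((\<lambda>f. (f 2, 0::real)) \<circ> (\<lambda>\<omega>. restrict (\<lambda>i. Y i \<omega>) {2})) = (\<lambda>\<omega>. (Y 2 \<omega>, 0))" by (auto simp: fun_eq_iff)
  have ind4: "indep_var borel (\<lambda>\<omega>. (Y 0 \<omega>, Y 0 \<omega> + Y 1 \<omega>)) borel (\<lambda>\<omega>. (Y 2 \<omega>, 0))"
    using ind3 unfolding e1 e2 .
  have pw: "Y 0 \<omega> = X a \<omega>" "Y (Suc 0) \<omega> = X b \<omega> - X a \<omega>" "Y 2 \<omega> = X c \<omega> - X b \<omega>"
    if "\<omega> \<in> space M" for \<omega>
    using that unfolding Y_def ts_def by (simp_all add: X0 numeral_2_eq_2)
  have B': "B \<times> UNIV \<in> sets (borel :: (real \<times> real) measure)"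
    using B unfolding borel_prod[symmetric] by simp
  have "prob ((\<lambda>\<omega>. ((Y 0 \<omega>, Y 0 \<omega> + Y 1 \<omega>), (Y 2 \<omega>, 0::real))) -` (A \<times> (B \<times> UNIV)) \<inter> space M)
      = prob ((\<lambda>\<omega>. (Y 0 \<omega>, Y 0 \<omega> + Y 1 \<omega>)) -` A \<inter> space M) * prob ((\<lambda>\<omega>. (Y 2 \<omega>, 0::real)) -` (B \<times> UNIV) \<inter> space M)"
    using indep_varD[OF ind4 A B'] by simp
  moreover have "(\<lambda>\<omega>. ((Y 0 \<omega>, Y 0 \<omega> + Y 1 \<omega>), (Y 2 \<omega>, 0::real))) -` (A \<times> (B \<times> UNIV)) \<inter> space M
      = {\<omega> \<in> space M. (X a \<omega>, X b \<omega>) \<in> A \<and> X c \<omega> - X b \<omega> \<in> B}"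
    using pw by auto
  moreover have "(\<lambda>\<omega>. (Y 0 \<omega>, Y 0 \<omega> + Y 1 \<omega>)) -` A \<inter> space M = {\<omega> \<in> space M. (X a \<omega>, X b \<omega>) \<in> A}"
    using pw by auto
  moreover have "(\<lambda>\<omega>. (Y 2 \<omega>, 0::real)) -` (B \<times> UNIV) \<inter> space M = {\<omega> \<in> space M. X c \<omega> - X b \<omega> \<in> B}"
    using pw by auto
  ultimately show ?thesis by simp
qed

end

lemma ennreal_suminf_swap: "(\<Sum>k. \<Sum>n. f k n :: ennreal) = (\<Sum>n. \<Sum>k. f k n)"
proof -
  have "(\<Sum>k. \<Sum>n. f k n) = (\<Sum>k. \<integral>\<^sup>+n. f k n \<partial>count_space UNIV)"
    by (simp add: nn_integral_count_space_nat)
  also have "\<dots> = (\<integral>\<^sup>+n. (\<Sum>k. f k n) \<partial>count_space UNIV)"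
    by (rule nn_integral_suminf[symmetric]) simp
  also have "\<dots> = (\<Sum>n. \<Sum>k. f k n)"
    by (simp add: nn_integral_count_space_nat)
  finally show ?thesis .
qed

context subo
begin

lemma renewal:
  assumes h: "0 < h"
  shows "(\<Sum>k. ennreal (prob {\<omega> \<in> space M. c - 1 < X (real k * h) \<omega> \<and> X (real k * h) \<omega> \<le> c}))
       \<le> (\<Sum>j. ennreal (prob {\<omega> \<in> space M. X (real j * h) \<omega> \<le> 1}))"
proof -
  define S where "S k \<omega> = X (real k * h) \<omega>" for k \<omega>
  have Smeas[measurable]: "S k \<in> borel_measurable M" for k unfolding S_def by (rule X_meas) (use h in simp)
  have Smono: "S i \<omega> \<le> S k \<omega>" if "\<omega> \<in> space M" "i \<le> k" for i k \<omega>
    unfolding S_def using that h by (intro Xmono) (auto intro: mult_right_mono)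
  define A where "A k = {\<omega> \<in> space M. c - 1 < S k \<omega> \<and> S k \<omega> \<le> c}" for k
  define E where "E m = {\<omega> \<in> space M. c - 1 < S m \<omega> \<and> (m = 0 \<or> S (m - 1) \<omega> \<le> c - 1)}" for m
  define F where "F m j = {\<omega> \<in> space M. S (m + j) \<omega> - S m \<omega> \<le> 1}" for m j
  define a where "a m = prob (E m)" for m
  define b where "b j = prob {\<omega> \<in> space M. S j \<omega> \<le> 1}" for j
  have Esets[measurable]: "E m \<in> sets M" for m unfolding E_def by measurable
  have Fsets[measurable]: "F m j \<in> sets M" for m j unfolding F_def by measurable
  have Asets[measurable]: "A k \<in> sets M" for k unfolding A_def by measurable
  have EF: "prob (E m \<inter> F m j) = a m * b j" for m j
  proof -
    define u where "u = real (m - 1) * h"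
    define v where "v = real m * h"
    define w where "w = real (m + j) * h"
    have uvw: "0 \<le> u" "u \<le> v" "v \<le> w" unfolding u_def v_def w_def using h
      by (auto intro!: mult_right_mono)
    define AA where "AA = {p :: real \<times> real. c - 1 < snd p \<and> (m = 0 \<or> fst p \<le> c - 1)}"
    have AA: "AA \<in> sets borel"
    proof -
      have "{p \<in> space (borel \<Otimes>\<^sub>M borel). c - 1 < snd p \<and> (m = 0 \<or> fst p \<le> (c::real) - 1)} \<in> sets (borel \<Otimes>\<^sub>M borel)"
        by measurable
      then show ?thesis unfolding AA_def borel_prod[symmetric] by (simp add: space_pair_measure)
    qed
    have BB: "{..1::real} \<in> sets borel" by simp
    have Su: "S (m - 1) \<omega> = X u \<omega>" "S m \<omega> = X v \<omega>" "S (m + j) \<omega> = X w \<omega>" for \<omega>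
      unfolding S_def u_def v_def w_def by simp_all
    have "E m \<inter> F m j = {\<omega> \<in> space M. (X u \<omega>, X v \<omega>) \<in> AA \<and> X w \<omega> - X v \<omega> \<in> {..1}}"
      unfolding E_def F_def AA_def Su by auto
    moreover have "E m = {\<omega> \<in> space M. (X u \<omega>, X v \<omega>) \<in> AA}"
      unfolding E_def AA_def Su by auto
    moreover have "prob {\<omega> \<in> space M. X w \<omega> - X v \<omega> \<in> {..1}} = b j"
    proof -
      have "w = v + real j * h" unfolding w_def v_def by (simp add: algebra_simps)
      then have "prob {\<omega> \<in> space M. X w \<omega> - X v \<omega> \<in> {..1}} = prob {\<omega> \<in> space M. X (real j * h) \<omega> \<in> {..1}}"
        using stat[of v "real j * h" "{..1}"] uvw h by simp
      then show ?thesis unfolding b_def S_def by simp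
    qed
    ultimately show ?thesis unfolding a_def using indep3[OF uvw AA BB] by simp
  qed
  have Asub: "A k \<subseteq> (\<Union>m\<in>{..k}. E m \<inter> F m (k - m))" for k
  proof
    fix \<omega> assume w: "\<omega> \<in> A k"
    then have sp: "\<omega> \<in> space M" and ck: "c - 1 < S k \<omega>" "S k \<omega> \<le> c" unfolding A_def by auto
    define m where "m = (LEAST m. c - 1 < S m \<omega>)"
    have m1: "c - 1 < S m \<omega>" unfolding m_def using ck(1) by (rule LeastI)
    have mk: "m \<le> k" unfolding m_def using ck(1) by (rule Least_le)
    have m2: "m = 0 \<or> S (m - 1) \<omega> \<le> c - 1"
    proof (cases m)
      case (Suc m')
      then have "\<not> c - 1 < S m' \<omega>" using not_less_Least[of m' "\<lambda>m. c - 1 < S m \<omega>"] m_def by auto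
      then show ?thesis using Suc by simp
    qed simp
    have "\<omega> \<in> E m" unfolding E_def using sp m1 m2 by auto
    moreover have "\<omega> \<in> F m (k - m)" unfolding F_def using sp mk m1 ck by auto
    ultimately show "\<omega> \<in> (\<Union>m\<in>{..k}. E m \<inter> F m (k - m))" using mk by auto
  qed
  have Ak: "prob (A k) \<le> (\<Sum>m\<le>k. a m * b (k - m))" for k
  proof -
    have "prob (A k) \<le> prob (\<Union>m\<in>{..k}. E m \<inter> F m (k - m))"
      using Asub by (intro finite_measure_mono) auto
    also have "\<dots> \<le> (\<Sum>m\<le>k. prob (E m \<inter> F m (k - m)))"
      by (intro finite_measure_subadditive_finite) auto
    finally show ?thesis by (simp add: EF)
  qed
  have Edisj: "disjoint_family E"
    unfolding disjoint_family_on_def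
  proof (intro ballI impI)
    fix m m' :: nat assume "m \<noteq> m'"
    then consider "m < m'" | "m' < m" by linarith
    then show "E m \<inter> E m' = {}"
    proof cases
      case 1
      show ?thesis
      proof safe
        fix \<omega> assume "\<omega> \<in> E m" "\<omega> \<in> E m'"
        then have sp: "\<omega> \<in> space M" "c - 1 < S m \<omega>" "m' = 0 \<or> S (m' - 1) \<omega> \<le> c - 1"
          unfolding E_def by auto
        moreover have "S m \<omega> \<le> S (m' - 1) \<omega>" using Smono[of \<omega> m "m' - 1"] 1 sp(1) by auto
        ultimately show "\<omega> \<in> {}" using 1 by auto
      qed
    next
      case 2
      show ?thesis
      proof safe
        fix \<omega> assume "\<omega> \<in> E m" "\<omega> \<in> E m'"
        then have sp: "\<omega> \<in> space M" "c - 1 < S m' \<omega>" "m = 0 \<or> S (m - 1) \<omega> \<le> c - 1"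
          unfolding E_def by auto
        moreover have "S m' \<omega> \<le> S (m - 1) \<omega>" using Smono[of \<omega> m' "m - 1"] 2 sp(1) by auto
        ultimately show "\<omega> \<in> {}" using 2 by auto
      qed
    qed
  qed
  have asums: "a sums prob (\<Union>m. E m)" unfolding a_def
    using Edisj by (intro finite_measure_UNION) auto
  have anneg: "0 \<le> a m" for m unfolding a_def by simp
  have bnneg: "0 \<le> b m" for m unfolding b_def by simp
  have asum_le: "(\<Sum>m. a m) \<le> 1" using asums by (simp add: sums_iff)
  show ?thesis
  proof (cases "summable b")
    case False
    then have "(\<Sum>j. ennreal (b j)) = \<top>" using bnneg summable_suminf_not_top by blast
    then show ?thesis unfolding b_def S_def by simp
  next
    case True
    have cs: "(\<lambda>k. \<Sum>m\<le>k. a m * b (k - m)) sums ((\<Sum>m. a m) * (\<Sum>j. b j))"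
      using asums True anneg bnneg by (intro Cauchy_product_sums) (auto simp: sums_iff)
    have "(\<Sum>k. ennreal (prob (A k))) \<le> (\<Sum>k. ennreal (\<Sum>m\<le>k. a m * b (k - m)))"
      using Ak by (intro suminf_le) (auto intro: ennreal_leI)
    also have "\<dots> = ennreal ((\<Sum>m. a m) * (\<Sum>j. b j))"
      using cs anneg bnneg by (intro suminf_ennreal_eq) (auto intro!: sum_nonneg)
    also have "\<dots> \<le> ennreal (\<Sum>j. b j)"
    proof (intro ennreal_leI mult_left_le_one_le asum_le)
      show "0 \<le> (\<Sum>j. b j)" using True bnneg by (rule suminf_nonneg)
      show "0 \<le> (\<Sum>m. a m)" using asums anneg by (intro suminf_nonneg) (auto simp: sums_iff)
    qed
    also have "\<dots> = (\<Sum>j. ennreal (b j))" using True bnneg by (simp add: suminf_ennreal2)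
    finally show ?thesis unfolding A_def b_def S_def .
  qed
qed

lemma Psi0: "Psi 0 = 0" unfolding Psi_def by simp

lemma psi_nn: "0 \<le> psi"
proof -
  have "0 \<le> d * lambda0" using d_nn lam by simp
  moreover have "Psi lambda0 \<le> 0" using Psi_mono[of 0] lam by (simp add: Psi0)
  ultimately show ?thesis unfolding psi_def by linarith
qed

lemma event_incl:
  assumes h: "0 < h" and x: "0 \<le> x" and y: "0 < y"
  shows "overshoot_event M X x y \<subseteq> (\<Union>k. \<Union>n.
    {\<omega> \<in> space M. (x - real n) - 1 < X (real k * h) \<omega> \<and> X (real k * h) \<omega> \<le> x - real n \<and>
                 y + real n \<le> X (real (Suc k) * h) \<omega> - X (real k * h) \<omega>})"
proof
  fix \<omega> assume "\<omega> \<in> overshoot_event M X x y"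
  then have sp: "\<omega> \<in> space M" and ne: "{t. 0 \<le> t \<and> x < X t \<omega>} \<noteq> {}"
    and ov: "y \<le> X (first_passage X x \<omega>) \<omega> - x"
    unfolding overshoot_event_def by auto
  define T where "T = {t. 0 \<le> t \<and> x < X t \<omega>}"
  define L where "L = Inf T"
  have LT: "first_passage X x \<omega> = L" unfolding first_passage_def L_def T_def ..
  have bdd: "bdd_below T" unfolding T_def by (rule bdd_belowI[of _ 0]) auto
  have L0: "0 \<le> L" unfolding L_def using ne unfolding T_def by (intro cInf_greatest) auto
  have XL: "x + y \<le> X L \<omega>" using ov LT by simp
  have Lpos: "0 < L"
  proof (rule ccontr)
    assume "\<not> 0 < L"
    then have "L = 0" using L0 by simp
    then have "X L \<omega> = 0" using X0[OF sp] by simp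
    then show False using XL x y by simp
  qed
  define k where "k = nat (\<lceil>L / h\<rceil> - 1)"
  have cpos: "1 \<le> \<lceil>L / h\<rceil>" using Lpos h by simp
  have rk: "real k = real_of_int \<lceil>L / h\<rceil> - 1" unfolding k_def using cpos by (subst of_nat_nat) auto
  have k1: "real k * h < L"
  proof -
    have "real k < L / h" using rk by linarith
    then show ?thesis using h by (simp add: pos_less_divide_eq)
  qed
  have k2: "L \<le> real (Suc k) * h"
  proof -
    have "L / h \<le> real (Suc k)" using rk by (simp add: ceiling_correct)
    then show ?thesis using h by (simp add: pos_divide_le_eq)
  qed
  have kh0: "0 \<le> real k * h" using h by simp
  have Sk: "X (real k * h) \<omega> \<le> x"
  proof (rule ccontr)
    assume "\<not> X (real k * h) \<omega> \<le> x"
    then have "real k * h \<in> T" unfolding T_def using kh0 by auto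
    then have "L \<le> real k * h" unfolding L_def using bdd by (rule cInf_lower)
    then show False using k1 by simp
  qed
  have Sk1: "X L \<omega> \<le> X (real (Suc k) * h) \<omega>" using Xmono[OF sp L0 k2] .
  define n where "n = nat \<lfloor>x - X (real k * h) \<omega>\<rfloor>"
  have n1: "real n \<le> x - X (real k * h) \<omega>" unfolding n_def using Sk by linarith
  have n2: "x - X (real k * h) \<omega> < real n + 1" unfolding n_def using Sk by linarith
  have "\<omega> \<in> {\<omega> \<in> space M. (x - real n) - 1 < X (real k * h) \<omega> \<and> X (real k * h) \<omega> \<le> x - real n \<and>
                 y + real n \<le> X (real (Suc k) * h) \<omega> - X (real k * h) \<omega>}"
    using sp n1 n2 XL Sk1 by auto
  then show "\<omega> \<in> (\<Union>k. \<Union>n.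
    {\<omega> \<in> space M. (x - real n) - 1 < X (real k * h) \<omega> \<and> X (real k * h) \<omega> \<le> x - real n \<and>
                 y + real n \<le> X (real (Suc k) * h) \<omega> - X (real k * h) \<omega>})" by blast
qed

lemma tail2:
  assumes h: "0 < h" and a: "1 \<le> a"
  shows "prob {\<omega> \<in> space M. a \<le> X h \<omega>}
           \<le> (exp (h * psi) - 1) / (1 - exp (- lambda0)) * exp (- lambda0 * a)"
proof -
  have G0: "0 \<le> exp (h * psi) - 1" using psi_nn h by simp
  have e1: "exp (- lambda0) < 1" using lam by simp
  have key: "exp (lambda0 * a) * (1 - exp (- lambda0)) \<le> exp (lambda0 * a) - 1"
  proof -
    have "exp (lambda0 * a) * exp (- lambda0) = exp (lambda0 * (a - 1))"
      by (simp add: exp_add[symmetric] algebra_simps)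
    moreover have "1 \<le> exp (lambda0 * (a - 1))" using a lam by simp
    ultimately show ?thesis by (simp add: algebra_simps)
  qed
  have pos: "0 < exp (lambda0 * a) * (1 - exp (- lambda0))" using e1 by simp
  have "prob {\<omega> \<in> space M. a \<le> X h \<omega>} \<le> (exp (h * psi) - 1) / (exp (lambda0 * a) - 1)"
    using tail[of h a] h a by simp
  also have "\<dots> \<le> (exp (h * psi) - 1) / (exp (lambda0 * a) * (1 - exp (- lambda0)))"
  proof (rule divide_left_mono[OF key G0])
    have "0 < exp (lambda0 * a) - 1" using key pos by linarith
    then show "0 < (exp (lambda0 * a) - 1) * (exp (lambda0 * a) * (1 - exp (- lambda0)))"
      using pos by (rule mult_pos_pos)
  qed
  also have "\<dots> = (exp (h * psi) - 1) / (1 - exp (- lambda0)) * exp (- lambda0 * a)"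
    by (simp add: exp_minus field_simps)
  finally show ?thesis .
qed

lemma main_bound:
  assumes h: "0 < h" and x: "0 \<le> x" and y: "1 \<le> y"
  shows "emeasure M (overshoot_event M X x y)
    \<le> ennreal ((exp (h * psi) - 1) / (1 - exp (- lambda0)) * exp (- lambda0 * y) / (1 - exp (- lambda0)))
       * (\<Sum>j. ennreal (prob {\<omega> \<in> space M. X (real j * h) \<omega> \<le> 1}))"
proof -
  define G where "G = (exp (h * psi) - 1) / (1 - exp (- lambda0))"
  have G0: "0 \<le> G" unfolding G_def using psi_nn h lam by (intro divide_nonneg_pos) auto
  define R where "R = (\<Sum>j. ennreal (prob {\<omega> \<in> space M. X (real j * h) \<omega> \<le> 1}))"
  define A where "A k n = {\<omega> \<in> space M. (x - real n) - 1 < X (real k * h) \<omega> \<and> X (real k * h) \<omega> \<le> x - real n \<and>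
                 y + real n \<le> X (real (Suc k) * h) \<omega> - X (real k * h) \<omega>}" for k n
  define p where "p k n = prob {\<omega> \<in> space M. (x - real n) - 1 < X (real k * h) \<omega> \<and> X (real k * h) \<omega> \<le> x - real n}" for k n
  define T where "T n = prob {\<omega> \<in> space M. y + real n \<le> X h \<omega>}" for n
  have kh: "0 \<le> real k * h" for k using h by simp
  have Asets: "A k n \<in> sets M" for k n unfolding A_def
  proof -
    note X_meas[OF kh[of k], measurable] X_meas[OF kh[of "Suc k"], measurable]
    show "{\<omega> \<in> space M. (x - real n) - 1 < X (real k * h) \<omega> \<and> X (real k * h) \<omega> \<le> x - real n \<and>
                 y + real n \<le> X (real (Suc k) * h) \<omega> - X (real k * h) \<omega>} \<in> sets M" by measurable
  qed
  have Aeq: "prob (A k n) = p k n * T n" for k n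
  proof -
    define AA where "AA = {q :: real \<times> real. (x - real n) - 1 < snd q \<and> snd q \<le> x - real n}"
    have AA: "AA \<in> sets borel"
    proof -
      have "{q \<in> space (borel \<Otimes>\<^sub>M borel). (x - real n) - 1 < snd q \<and> snd q \<le> x - real n} \<in> sets (borel \<Otimes>\<^sub>M borel)"
        by measurable
      then show ?thesis unfolding AA_def borel_prod[symmetric] by (simp add: space_pair_measure)
    qed
    have BB: "{y + real n..} \<in> sets (borel :: real measure)" by simp
    have abc: "0 \<le> real k * h" "real k * h \<le> real k * h" "real k * h \<le> real (Suc k) * h"
      using h by auto
    have "prob (A k n) = prob {\<omega> \<in> space M. (X (real k * h) \<omega>, X (real k * h) \<omega>) \<in> AA \<and>
                 X (real (Suc k) * h) \<omega> - X (real k * h) \<omega> \<in> {y + real n..}}"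
      unfolding A_def AA_def by (intro arg_cong[where f=prob]) auto
    also have "\<dots> = prob {\<omega> \<in> space M. (X (real k * h) \<omega>, X (real k * h) \<omega>) \<in> AA}
       * prob {\<omega> \<in> space M. X (real (Suc k) * h) \<omega> - X (real k * h) \<omega> \<in> {y + real n..}}"
      by (rule indep3[OF abc AA BB])
    also have "prob {\<omega> \<in> space M. (X (real k * h) \<omega>, X (real k * h) \<omega>) \<in> AA} = p k n"
      unfolding p_def AA_def by simp
    also have "prob {\<omega> \<in> space M. X (real (Suc k) * h) \<omega> - X (real k * h) \<omega> \<in> {y + real n..}} = T n"
    proof -
      have "real (Suc k) * h = real k * h + h" by (simp add: algebra_simps)
      then have "prob {\<omega> \<in> space M. X (real (Suc k) * h) \<omega> - X (real k * h) \<omega> \<in> {y + real n..}}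
          = prob {\<omega> \<in> space M. X h \<omega> \<in> {y + real n..}}"
        using stat[OF kh[of k] _ BB] h by simp
      then show ?thesis unfolding T_def by simp
    qed
    finally show ?thesis .
  qed
  have Tle: "T n \<le> G * exp (- lambda0 * y) * exp (- lambda0) ^ n" for n
  proof -
    have "T n \<le> G * exp (- lambda0 * (y + real n))"
      unfolding T_def G_def using tail2[OF h, of "y + real n"] y by simp
    also have "exp (- lambda0 * (y + real n)) = exp (- lambda0 * y) * exp (- lambda0) ^ n"
      by (simp add: exp_add[symmetric] exp_of_nat_mult[symmetric] algebra_simps)
    finally show ?thesis by (simp add: mult.assoc)
  qed
  have "emeasure M (overshoot_event M X x y) \<le> emeasure M (\<Union>k. \<Union>n. A k n)"
    using event_incl[OF h x] y Asets unfolding A_def[symmetric]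
    by (intro emeasure_mono) (auto simp: A_def)
  also have "\<dots> \<le> (\<Sum>k. emeasure M (\<Union>n. A k n))"
    using Asets by (intro emeasure_subadditive_countably) auto
  also have "\<dots> \<le> (\<Sum>k. \<Sum>n. emeasure M (A k n))"
    using Asets by (intro suminf_le emeasure_subadditive_countably) auto
  also have "\<dots> = (\<Sum>k. \<Sum>n. ennreal (p k n) * ennreal (T n))"
    by (simp add: emeasure_eq_measure Aeq p_def T_def ennreal_mult)
  also have "\<dots> = (\<Sum>n. \<Sum>k. ennreal (p k n) * ennreal (T n))"
    by (rule ennreal_suminf_swap)
  also have "\<dots> = (\<Sum>n. (\<Sum>k. ennreal (p k n)) * ennreal (T n))"
    by simp
  also have "\<dots> \<le> (\<Sum>n. R * ennreal (G * exp (- lambda0 * y) * exp (- lambda0) ^ n))"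
  proof (intro suminf_le mult_mono)
    fix n
    show "(\<Sum>k. ennreal (p k n)) \<le> R"
      unfolding p_def R_def using renewal[OF h, of "x - real n"] by simp
    show "ennreal (T n) \<le> ennreal (G * exp (- lambda0 * y) * exp (- lambda0) ^ n)"
      using Tle by (rule ennreal_leI)
  qed auto
  also have "\<dots> = R * (\<Sum>n. ennreal (G * exp (- lambda0 * y) * exp (- lambda0) ^ n))"
    by simp
  also have "(\<Sum>n. ennreal (G * exp (- lambda0 * y) * exp (- lambda0) ^ n))
       = ennreal (G * exp (- lambda0 * y) * (1 / (1 - exp (- lambda0))))"
  proof (rule suminf_ennreal_eq)
    show "0 \<le> G * exp (- lambda0 * y) * exp (- lambda0) ^ n" for n using G0 by simp
    have "(\<lambda>n. exp (- lambda0) ^ n) sums (1 / (1 - exp (- lambda0)))"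
      using lam by (intro geometric_sums) simp
    then show "(\<lambda>n. G * exp (- lambda0 * y) * exp (- lambda0) ^ n) sums (G * exp (- lambda0 * y) * (1 / (1 - exp (- lambda0))))"
      by (rule sums_mult)
  qed
  finally show ?thesis unfolding G_def R_def by (simp add: mult.commute)
qed

end

lemma exp_m1_le: fixes u :: real assumes "0 \<le> u" "u \<le> 1" shows "exp u - 1 \<le> exp 1 * u"
proof -
  have "1 - u \<le> exp (- u)" using exp_ge_add_one_self[of "-u"] by simp
  then have "(1 - u) * exp u \<le> exp (- u) * exp u" by (intro mult_right_mono) auto
  then have "(1 - u) * exp u \<le> 1" by (simp add: exp_minus)
  then have "exp u - 1 \<le> u * exp u" by (simp add: algebra_simps)
  also have "\<dots> \<le> u * exp 1" using assms by (intro mult_left_mono) auto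
  finally show ?thesis by (simp add: mult.commute)
qed

lemma one_m_exp_ge: fixes v :: real assumes "0 \<le> v" "v \<le> 1" shows "v / 2 \<le> 1 - exp (- v)"
proof -
  have "1 + v \<le> exp v" by (rule exp_ge_add_one_self)
  then have "exp (- v) \<le> 1 / (1 + v)" using assms by (simp add: exp_minus field_simps)
  moreover have "v / 2 \<le> 1 - 1 / (1 + v)"
  proof -
    have "v * v \<le> v * 1" using assms by (intro mult_left_mono) auto
    then show ?thesis using assms by (simp add: field_simps)
  qed
  ultimately show ?thesis by linarith
qed

context subo
begin

lemma Psim1_nn: "0 \<le> Psi (- 1)"
  unfolding Psi_def
proof (rule integral_nonneg_AE)
  show "AE x in Lev. 0 \<le> 1 - exp (- 1 * x)" using AE_pos by eventually_elim simp
qed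

lemma Psim1_zero:
  assumes "Psi (- 1) = 0" shows "Psi lambda0 = 0"
proof -
  have int: "integrable Lev (\<lambda>x. 1 - exp ((- 1) * x))" using lam by (intro int_Psi) auto
  have "AE x in Lev. 1 - exp ((- 1) * x) = 0"
    using assms int AE_pos unfolding Psi_def
    by (subst integral_nonneg_eq_0_iff_AE[symmetric]) (auto elim!: eventually_mono)
  then have "AE x in Lev. 1 - exp (lambda0 * x) = 0" using AE_pos
    by eventually_elim simp
  then show ?thesis unfolding Psi_def by (simp add: integral_eq_zero_AE)
qed

lemma sum_small:
  assumes h: "0 < h" and Phi: "0 < d + Psi (- 1)"
  shows "(\<Sum>j. ennreal (prob {\<omega> \<in> space M. X (real j * h) \<omega> \<le> 1}))
      \<le> ennreal (exp 1 / (1 - exp (- (h * (d + Psi (- 1))))))"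
proof -
  define q where "q = exp (- (h * (d + Psi (- 1))))"
  have q: "0 \<le> q" "q < 1" unfolding q_def using h Phi by auto
  have "(\<Sum>j. ennreal (prob {\<omega> \<in> space M. X (real j * h) \<omega> \<le> 1})) \<le> (\<Sum>j. ennreal (exp 1 * q ^ j))"
  proof (intro suminf_le ennreal_leI)
    fix j
    have "prob {\<omega> \<in> space M. X (real j * h) \<omega> \<le> 1} \<le> exp 1 * exp (- (real j * h) * (d + Psi (- 1)))"
      using small[of "real j * h"] h by simp
    also have "exp (- (real j * h) * (d + Psi (- 1))) = q ^ j"
      unfolding q_def by (simp add: exp_of_nat_mult[symmetric] algebra_simps)
    finally show "prob {\<omega> \<in> space M. X (real j * h) \<omega> \<le> 1} \<le> exp 1 * q ^ j" .
  qed auto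
  also have "\<dots> = ennreal (exp 1 * (1 / (1 - q)))"
  proof (rule suminf_ennreal_eq)
    show "0 \<le> exp 1 * q ^ j" for j using q by simp
    show "(\<lambda>j. exp 1 * q ^ j) sums (exp 1 * (1 / (1 - q)))"
      using q by (intro sums_mult geometric_sums) auto
  qed
  finally show ?thesis unfolding q_def by simp
qed

end

theorem proposition2p2:
  fixes Lev :: "real measure" and lambda0 :: real
  assumes "0 < lambda0"
    and "(\<integral>\<^sup>+ x. ennreal (exp (lambda0 * x) - 1) \<partial>Lev) < \<infinity>"
  shows "\<exists>C::real. 0 < C \<and>
           (\<forall>(M::'a measure) X d. subordinator_dl M X d Lev \<longrightarrow>
              (\<forall>x\<ge>0. \<forall>y\<ge>0. measure M (overshoot_event M X x y) \<le> C * exp (- lambda0 * y)))"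
proof -
  note lam = assms(1)
  define Kr where "Kr = (\<integral>x. exp (lambda0 * x) - 1 \<partial>Lev)"
  define I1 where "I1 = (\<integral>x. 1 - exp (- 1 * x) \<partial>Lev)"
  define kap where "kap = max lambda0 (Kr / I1)"
  define D where "D = 1 - exp (- lambda0)"
  have D0: "0 < D" unfolding D_def using lam by simp
  define C where "C = max (exp lambda0) (2 * exp 1 ^ 2 * kap / D ^ 2 + 1)"
  have kap0: "0 < kap" unfolding kap_def using lam by simp
  have C0: "0 < C" unfolding C_def using exp_gt_zero[of lambda0] by (simp add: less_max_iff_disj)
  show ?thesis
  proof (intro exI[of _ C] conjI allI impI C0)
    fix M :: "'a measure" and X d and x y :: real
    assume sdl: "subordinator_dl M X d Lev" and x: "0 \<le> x" and y: "0 \<le> y"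
    interpret subo Lev lambda0 M X d
      by unfold_locales (use sdl assms in \<open>auto simp: subordinator_dl_def\<close>)
    have PsiL: "Psi lambda0 = - Kr"
    proof -
      have "Psi lambda0 = (\<integral>x. - (exp (lambda0 * x) - 1) \<partial>Lev)" unfolding Psi_def by simp
      also have "\<dots> = - Kr" unfolding Kr_def by (rule Bochner_Integration.integral_minus)
      finally show ?thesis .
    qed
    have PsiI: "Psi (- 1) = I1" unfolding Psi_def I1_def by simp
    have Kr0: "0 \<le> Kr" using Psi_mono[of 0] lam PsiL Psi0 by simp
    have I10: "0 \<le> I1" using Psim1_nn PsiI by simp
    have psi_le: "psi \<le> kap * (d + Psi (- 1))"
    proof -
      have "d * lambda0 \<le> kap * d" using d_nn unfolding kap_def by (simp add: mult.commute mult_left_mono)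
      moreover have "Kr \<le> kap * I1"
      proof (cases "I1 = 0")
        case True
        then have "Kr = 0" using Psim1_zero PsiI PsiL by simp
        then show ?thesis using True by simp
      next
        case False
        then have "0 < I1" using I10 by simp
        then have "Kr = (Kr / I1) * I1" by simp
        also have "\<dots> \<le> kap * I1" using \<open>0 < I1\<close> unfolding kap_def by (intro mult_right_mono) auto
        finally show ?thesis .
      qed
      ultimately show ?thesis unfolding psi_def PsiL PsiI by (simp add: algebra_simps)
    qed
    {
      define W where "W = exp (- lambda0 * y)"
      have W0: "0 < W" unfolding W_def by simp
      show "measure M (overshoot_event M X x y) \<le> C * exp (- lambda0 * y)"
      proof (cases "y < 1")
        case True
        have "measure M (overshoot_event M X x y) \<le> 1" by (rule prob_le_1)
        also have "1 \<le> exp lambda0 * exp (- lambda0 * y)"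
        proof -
          have "exp lambda0 * exp (- lambda0 * y) = exp (lambda0 * (1 - y))"
            by (simp add: exp_add[symmetric] algebra_simps)
          moreover have "0 \<le> lambda0 * (1 - y)" using True lam by simp
          ultimately show ?thesis by simp
        qed
        also have "\<dots> \<le> C * exp (- lambda0 * y)" unfolding C_def by (intro mult_right_mono) auto
        finally show ?thesis .
      next
        case False
        then have y1: "1 \<le> y" by simp
        define Phi where "Phi = d + Psi (- 1)"
        have Phi0: "0 \<le> Phi" unfolding Phi_def using d_nn Psim1_nn by simp
        show ?thesis
        proof (cases "Phi = 0")
          case True
          then have "d = 0" "Psi (- 1) = 0" using d_nn Psim1_nn unfolding Phi_def by linarith+
          then have psi0: "psi = 0" unfolding psi_def using Psim1_zero by simp
          have mb: "emeasure M (overshoot_event M X x y) \<le> ennreal ((exp (1 * psi) - 1) / (1 - exp (- lambda0)) * exp (- lambda0 * y) / (1 - exp (- lambda0)))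
             * (\<Sum>j. ennreal (prob {\<omega> \<in> space M. X (real j * 1) \<omega> \<le> 1}))"
            by (rule main_bound) (use x y1 in auto)
          have z: "(exp (1 * psi) - 1) / (1 - exp (- lambda0)) * exp (- lambda0 * y) / (1 - exp (- lambda0)) = 0"
            using psi0 by simp
          have "emeasure M (overshoot_event M X x y) \<le> 0" using mb unfolding z by simp
          then have "measure M (overshoot_event M X x y) = 0"
            unfolding measure_def by simp
          then show ?thesis using C0 by simp
        next
          case False
          then have Phip: "0 < Phi" using Phi0 by simp
          define h where "h = 1 / (psi + Phi + 1)"
          have hp: "0 < h" unfolding h_def using psi_nn Phi0 by simp
          define u where "u = h * psi"
          define v where "v = h * Phi"
          have h1: "h * (psi + Phi + 1) = 1" unfolding h_def using psi_nn Phi0 by simp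
          have hs: "h * psi + h * Phi + h = 1" using h1 by (simp add: distrib_left)
          have hpsi: "0 \<le> h * psi" using hp psi_nn by simp
          have hPhi: "0 < h * Phi" using hp Phip by simp
          have u: "0 \<le> u" "u \<le> 1" unfolding u_def using hs hpsi hPhi hp by linarith+
          have v: "0 < v" "v \<le> 1" unfolding v_def using hs hpsi hPhi hp by linarith+
          define A where "A = exp u - 1"
          define Q where "Q = 1 - exp (- v)"
          have A: "0 \<le> A" "A \<le> exp 1 * u" unfolding A_def using u exp_m1_le[OF u] by auto
          have Q: "v / 2 \<le> Q" unfolding Q_def using one_m_exp_ge[of v] v by simp
          have Q0: "0 < Q" using Q v by simp
          have "emeasure M (overshoot_event M X x y)
             \<le> ennreal (A / D * W / D) * ennreal (exp 1 / Q)"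
          proof -
            have "emeasure M (overshoot_event M X x y)
               \<le> ennreal (A / D * W / D) * (\<Sum>j. ennreal (prob {\<omega> \<in> space M. X (real j * h) \<omega> \<le> 1}))"
              using main_bound[OF hp x y1] unfolding A_def D_def W_def u_def .
            also have "\<dots> \<le> ennreal (A / D * W / D) * ennreal (exp 1 / Q)"
            proof (rule mult_left_mono)
              show "(\<Sum>j. ennreal (prob {\<omega> \<in> space M. X (real j * h) \<omega> \<le> 1})) \<le> ennreal (exp 1 / Q)"
                unfolding Q_def v_def Phi_def by (rule sum_small[OF hp Phip[unfolded Phi_def]])
            qed simp
            finally show ?thesis .
          qed
          also have "\<dots> = ennreal (A / D * W / D * (exp 1 / Q))"
          proof (rule ennreal_mult[symmetric])
            show "0 \<le> A / D * W / D" using A D0 W0 by simp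
            show "0 \<le> exp 1 / Q" using Q0 by simp
          qed
          finally have em: "emeasure M (overshoot_event M X x y) \<le> ennreal (A / D * W / D * (exp 1 / Q))" .
          have r0: "0 \<le> A / D * W / D * (exp 1 / Q)" using A D0 W0 Q0 by simp
          have "measure M (overshoot_event M X x y) \<le> A / D * W / D * (exp 1 / Q)"
            using em r0 by (metis emeasure_eq_measure ennreal_le_iff)
          also have "\<dots> = (A * exp 1 * W) / (D ^ 2 * Q)"
            using D0 Q0 by (simp add: power2_eq_square)
          also have "\<dots> \<le> ((exp 1 * u) * exp 1 * W) / (D ^ 2 * (v / 2))"
          proof (rule frac_le)
            show "0 \<le> (exp 1 * u) * exp 1 * W" using u W0 by simp
            show "A * exp 1 * W \<le> (exp 1 * u) * exp 1 * W"
              using A W0 by (intro mult_right_mono) auto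
            show "0 < D ^ 2 * (v / 2)" using D0 v by simp
            show "D ^ 2 * (v / 2) \<le> D ^ 2 * Q" using Q D0 by (intro mult_left_mono) auto
          qed
          also have "\<dots> = (2 * exp 1 ^ 2 * W / D ^ 2) * (u / v)"
            using D0 v by (simp add: power2_eq_square field_simps)
          also have "u / v = psi / Phi" unfolding u_def v_def using hp by simp
          also have "(2 * exp 1 ^ 2 * W / D ^ 2) * (psi / Phi) \<le> (2 * exp 1 ^ 2 * W / D ^ 2) * kap"
          proof (rule mult_left_mono)
            show "psi / Phi \<le> kap" using psi_le Phip unfolding Phi_def by (simp add: divide_le_eq mult.commute)
            show "0 \<le> 2 * exp 1 ^ 2 * W / D ^ 2" using W0 by simp
          qed
          also have "\<dots> = (2 * exp 1 ^ 2 * kap / D ^ 2) * W" by simp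
          also have "\<dots> \<le> C * W" unfolding C_def using W0 by (intro mult_right_mono) auto
          finally show ?thesis unfolding W_def .
        qed
      qed
    }
  qed
qed

end
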